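(* In a sufficiently small neighborhood of $s_0\in\mathbb{R}$, the signed Korányi chord length function $\operatorname{ch}_{\mathcal{H}}$ is a smooth function satisfying $\operatorname{ch}_{\mathcal{H}}'(s)>0$. Moreover, the size of such a neighborhood in $\mathbb{R}$ can be taken uniformly for all $p\in K$.
   Context: $\mathcal{H}=\mathbb{C}\times\mathbb{R}$ is the 3-dimensional Heisenberg group with coordinates $(x,y,u)$, group law $(x,y,u)\cdot(x',y',u')=(x+x',y+y',u+u'+\tfrac12(xy'-x'y))$, horizontal distribution spanned by $X=\partial_x-\tfrac12 y\,\partial_u$, $Y=\partial_y+\tfrac12 x\,\partial_u$ (orthonormal, norm $|\cdot|$). The Korányi distance is $d_{\mathcal{H}}(p,q)=\|p^{-1}q\|_{\mathcal{H}}$ with $\|(x,y,u)\|_{\mathcal{H}}=\sqrt[4]{(x^2+y^2)^2+16u^2}$. Let $K$ be a smooth Legendrian knot (closed, embedded, with horizontal velocity), parametrized by arc length $\gamma$, extended to a periodic map $\gamma\colon\mathbb{R}\to\mathcal{H}$ with period the length of $K$. Fix $p=\gamma(s_0)\in K$. The signed chord length function $\operatorname{ch}_{\mathcal{H}}\colon\mathbb{R}\to\mathbb{R}$ is defined by $\operatorname{ch}_{\mathcal{H}}(s)=d_{\mathcal{H}}(p,\gamma(s))$ for $s>s_0$, $0$ for $s=s_0$, and $-d_{\mathcal{H}}(p,\gamma(s))$ for $s<s_0$. *)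

theory Defs
  imports "HOL-Analysis.Analysis"
begin

type_synonym heis = "real \<times> real \<times> real"

definition hx :: "heis \<Rightarrow> real" where "hx p = fst p"
definition hy :: "heis \<Rightarrow> real" where "hy p = fst (snd p)"
definition hu :: "heis \<Rightarrow> real" where "hu p = snd (snd p)"

definition heis_mult :: "heis \<Rightarrow> heis \<Rightarrow> heis" where
  "heis_mult p q = (hx p + hx q, hy p + hy q,
                    hu p + hu q + (hx p * hy q - hx q * hy p) / 2)"

definition heis_inv :: "heis \<Rightarrow> heis" where
  "heis_inv p = (- hx p, - hy p, - hu p)"

definition koranyi_norm :: "heis \<Rightarrow> real" where
  "koranyi_norm p = ((hx p ^ 2 + hy p ^ 2) ^ 2 + 16 * hu p ^ 2) powr (1/4)"

definition koranyi_dist :: "heis \<Rightarrow> heis \<Rightarrow> real" where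
  "koranyi_dist p q = koranyi_norm (heis_mult (heis_inv p) q)"

definition smooth_on :: "real set \<Rightarrow> (real \<Rightarrow> real) \<Rightarrow> bool" where
  "smooth_on S f \<longleftrightarrow> (\<forall>n. \<forall>x\<in>S. ((deriv ^^ n) f) differentiable (at x))"

definition smooth_curve :: "(real \<Rightarrow> heis) \<Rightarrow> bool" where
  "smooth_curve \<gamma> \<longleftrightarrow> smooth_on UNIV (\<lambda>s. hx (\<gamma> s)) \<and>
     smooth_on UNIV (\<lambda>s. hy (\<gamma> s)) \<and> smooth_on UNIV (\<lambda>s. hu (\<gamma> s))"

text \<open>gamma is the arc-length parametrization, extended L-periodically (L = length of K),
  of a smooth Legendrian knot K: smooth, L-periodic, injective on one period (closed,
  embedded), horizontal velocity (velocity = x' X + y' Y, i.e. u' = (x y' - x' y)/2),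
  and unit horizontal speed.\<close>
definition legendrian_knot_param :: "(real \<Rightarrow> heis) \<Rightarrow> real \<Rightarrow> bool" where
  "legendrian_knot_param \<gamma> L \<longleftrightarrow>
     L > 0 \<and> smooth_curve \<gamma> \<and>
     (\<forall>s. \<gamma> (s + L) = \<gamma> s) \<and>
     inj_on \<gamma> {0..<L} \<and>
     (\<forall>s. deriv (\<lambda>t. hu (\<gamma> t)) s =
            (hx (\<gamma> s) * deriv (\<lambda>t. hy (\<gamma> t)) s
             - deriv (\<lambda>t. hx (\<gamma> t)) s * hy (\<gamma> s)) / 2) \<and>
     (\<forall>s. (deriv (\<lambda>t. hx (\<gamma> t)) s)\<^sup>2 + (deriv (\<lambda>t. hy (\<gamma> t)) s)\<^sup>2 = 1)"

definition chord_H :: "(real \<Rightarrow> heis) \<Rightarrow> real \<Rightarrow> real \<Rightarrow> real" where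
  "chord_H \<gamma> s0 s =
     (if s > s0 then koranyi_dist (\<gamma> s0) (\<gamma> s)
      else if s = s0 then 0
      else - koranyi_dist (\<gamma> s0) (\<gamma> s))"

end

theory Submission
  imports Defs
begin

fun Dn :: "nat \<Rightarrow> real set \<Rightarrow> (real \<Rightarrow> real) \<Rightarrow> bool" where
  "Dn 0 S f = (\<forall>x\<in>S. f differentiable (at x))"
| "Dn (Suc n) S f = (\<exists>f'. (\<forall>x\<in>S. (f has_real_derivative f' x) (at x)) \<and> Dn n S f')"

lemma DnI: "(\<forall>x\<in>S. (f has_real_derivative f' x) (at x)) \<Longrightarrow> Dn n S f' \<Longrightarrow> Dn (Suc n) S f"
  by auto

lemma Dn_mono: "Dn (Suc n) S f \<Longrightarrow> Dn n S f"
proof (induction n arbitrary: f)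
  case 0
  then show ?case using real_differentiable_def by auto
next
  case (Suc n)
  then show ?case by (metis Dn.simps(2))
qed

lemma Dn_le: "m \<le> n \<Longrightarrow> Dn n S f \<Longrightarrow> Dn m S f"
proof (induction n rule: dec_induct)
  case base then show ?case .
next
  case (step k) then show ?case using Dn_mono by blast
qed

lemma Dn_cont: "Dn n S f \<Longrightarrow> x \<in> S \<Longrightarrow> isCont f x"
  using Dn_le[of 0 n S f] by (auto intro: differentiable_imp_continuous_within)

lemma Dn_contUNIV: "Dn n UNIV f \<Longrightarrow> continuous_on UNIV f"
  by (meson Dn_cont UNIV_I continuous_at_imp_continuous_on)

lemma Dn_subset: "Dn n S f \<Longrightarrow> T \<subseteq> S \<Longrightarrow> Dn n T f"
  by (induction n arbitrary: f) auto

lemma Dn_const: "Dn n S (\<lambda>x. c)"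
proof (induction n arbitrary: c)
  case 0 then show ?case by simp
next
  case (Suc n)
  have "\<forall>x\<in>S. ((\<lambda>x. c) has_real_derivative 0) (at x)" by auto
  then show ?case using Suc by (rule DnI)
qed

lemma Dn_id: "Dn n S (\<lambda>x. x)"
proof (cases n)
  case 0 then show ?thesis by simp
next
  case (Suc m)
  have "\<forall>x\<in>S. ((\<lambda>x. x) has_real_derivative 1) (at x)" by auto
  then have "Dn (Suc m) S (\<lambda>x. x)" using Dn_const by (rule DnI)
  then show ?thesis using Suc by simp
qed

lemma Dn_add: "Dn n S f \<Longrightarrow> Dn n S g \<Longrightarrow> Dn n S (\<lambda>x. f x + g x)"
proof (induction n arbitrary: f g)
  case 0 then show ?case by auto
next
  case (Suc n)
  then obtain f' g' where f': "\<forall>x\<in>S. (f has_real_derivative f' x) (at x)" "Dn n S f'"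
     and g': "\<forall>x\<in>S. (g has_real_derivative g' x) (at x)" "Dn n S g'" by auto
  have "\<forall>x\<in>S. ((\<lambda>x. f x + g x) has_real_derivative f' x + g' x) (at x)"
    using Suc.prems f' g' by (auto intro!: derivative_eq_intros)
  moreover have "Dn n S (\<lambda>x. f' x + g' x)" using Suc.IH f' g' by blast
  ultimately show ?case by (rule DnI)
qed

lemma Dn_mult: "Dn n S f \<Longrightarrow> Dn n S g \<Longrightarrow> Dn n S (\<lambda>x. f x * g x)"
proof (induction n arbitrary: f g)
  case 0 then show ?case by auto
next
  case (Suc n)
  then obtain f' g' where f': "\<forall>x\<in>S. (f has_real_derivative f' x) (at x)" "Dn n S f'"
     and g': "\<forall>x\<in>S. (g has_real_derivative g' x) (at x)" "Dn n S g'" by auto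
  have fn: "Dn n S f" "Dn n S g" using Suc.prems Dn_mono by auto
  have "Dn n S (\<lambda>x. f' x * g x + f x * g' x)"
    using Suc.IH f' g' fn by (intro Dn_add) auto
  moreover have "\<forall>x\<in>S. ((\<lambda>x. f x * g x) has_real_derivative f' x * g x + f x * g' x) (at x)"
    using f' g' by (auto intro!: derivative_eq_intros)
  ultimately show ?case by (rule DnI[rotated])
qed

lemma Dn_compose: "Dn n T g \<Longrightarrow> Dn n S f \<Longrightarrow> (\<And>x. x \<in> S \<Longrightarrow> f x \<in> T) \<Longrightarrow> Dn n S (\<lambda>x. g (f x))"
proof (induction n arbitrary: f g)
  case 0
  show ?case unfolding Dn.simps
  proof
    fix x assume x: "x \<in> S"
    then have "f differentiable at x" "g differentiable at (f x)" using 0 by auto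
    then show "(\<lambda>x. g (f x)) differentiable at x" using differentiable_chain_at[of f x g] by (simp add: o_def)
  qed
next
  case (Suc n)
  then obtain f' g' where f': "\<forall>x\<in>S. (f has_real_derivative f' x) (at x)" "Dn n S f'"
     and g': "\<forall>x\<in>T. (g has_real_derivative g' x) (at x)" "Dn n T g'" by auto
  have fn: "Dn n S f" using Suc.prems Dn_mono by auto
  have "Dn n S (\<lambda>x. g' (f x) * f' x)"
    by (rule Dn_mult[OF Suc.IH[OF g'(2) fn Suc.prems(3)] f'(2)])
  moreover have "\<forall>x\<in>S. ((\<lambda>x. g (f x)) has_real_derivative g' (f x) * f' x) (at x)"
    using f' g' Suc.prems(3) by (metis DERIV_chain2)
  ultimately show ?case by (rule DnI[rotated])
qed

lemma Dn_powr: "Dn n {0<..} (\<lambda>x. c * x powr r)"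
proof (induction n arbitrary: c r)
  case 0 then show ?case
    by (auto intro!: derivative_eq_intros simp: real_differentiable_def)
next
  case (Suc n)
  have "\<forall>x\<in>{0<..}. ((\<lambda>x. c * x powr r) has_real_derivative (c*r) * x powr (r - 1)) (at x)"
    by (auto intro!: derivative_eq_intros)
  then show ?case using Suc by (rule DnI)
qed

definition Sm where "Sm S f = (\<forall>n. Dn n S f)"

definition J :: "(real \<Rightarrow> real) \<Rightarrow> nat \<Rightarrow> real \<Rightarrow> real \<Rightarrow> real" where
  "J g k a s = integral {0..1} (\<lambda>\<tau>. \<tau>^k * g (a + \<tau>*(s-a)))"

lemma cont_comp_aff:
  fixes g :: "real \<Rightarrow> real"
  assumes "continuous_on UNIV g"
  shows "continuous_on UNIV (\<lambda>\<tau>. \<tau>^k * g (a + \<tau>*(x-a)))"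
proof -
  have "continuous_on UNIV (\<lambda>\<tau>. a + \<tau>*(x-a))" by (intro continuous_intros)
  then have "continuous_on UNIV (\<lambda>\<tau>. g (a + \<tau>*(x-a)))"
    using continuous_on_compose2[OF assms] by blast
  then show ?thesis by (auto intro!: continuous_intros)
qed

lemma J_integrable:
  fixes g :: "real \<Rightarrow> real"
  assumes "continuous_on UNIV g"
  shows "(\<lambda>\<tau>. \<tau>^k * g (a + \<tau>*(x-a))) integrable_on {0..1}"
  by (rule integrable_continuous_real) (rule continuous_on_subset[OF cont_comp_aff[OF assms]], simp)

lemma J_deriv:
  assumes g: "\<And>s. (g has_real_derivative g' s) (at s)" and c: "continuous_on UNIV g'"
  shows "(J g k a has_real_derivative J g' (Suc k) a s) (at s)"
proof -
  have cg: "continuous_on UNIV g"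
    using g by (meson DERIV_isCont continuous_at_imp_continuous_on)
  have cont2: "continuous_on (UNIV \<times> cbox 0 1) (\<lambda>p. snd p ^ Suc k * g' (a + snd p * (fst p - a)))"
  proof -
    have "continuous_on (UNIV \<times> cbox 0 1) (\<lambda>p. g' (a + snd p * (fst p - a)))"
      by (rule continuous_on_compose2[OF c]) (auto intro!: continuous_intros)
    then show ?thesis by (auto intro!: continuous_intros)
  qed
  have "((\<lambda>s. integral (cbox 0 1) (\<lambda>\<tau>. \<tau>^k * g (a + \<tau>*(s-a)))) has_field_derivative
      integral (cbox 0 1) (\<lambda>\<tau>. \<tau>^Suc k * g' (a + \<tau>*(s-a)))) (at s within UNIV)"
  proof (rule leibniz_rule_field_derivative[where fx="\<lambda>x t. t^Suc k * g' (a + t*(x-a))"])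
    fix x t :: real
    have "((\<lambda>x. g (a + t*(x-a))) has_real_derivative g' (a + t*(x-a)) * t) (at x)"
      by (rule DERIV_chain2[OF g]) (auto intro!: derivative_eq_intros)
    then have "((\<lambda>x. t^k * g (a + t*(x-a))) has_real_derivative t^k * (g' (a + t*(x-a)) * t)) (at x)"
      by (rule DERIV_cmult)
    then show "((\<lambda>x. t^k * g (a + t*(x-a))) has_field_derivative t^Suc k * g' (a + t*(x-a))) (at x within UNIV)"
      by (simp add: algebra_simps)
  next
    fix x :: real
    show "(\<lambda>\<tau>. \<tau>^k * g (a + \<tau>*(x-a))) integrable_on cbox 0 1"
      using J_integrable[OF cg] by simp
  next
    show "continuous_on (UNIV \<times> cbox 0 1) (\<lambda>(x, t). t ^ Suc k * g' (a + t * (x - a)))"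
      using cont2 by (simp add: case_prod_beta)
  qed auto
  then show ?thesis unfolding J_def by simp
qed

lemma J_same: "J g 0 a a = g a"
  by (simp add: J_def)

lemma hadamard:
  assumes g: "\<And>s. (f has_real_derivative f' s) (at s)" and c: "continuous_on UNIV f'"
  shows "f s - f a = (s - a) * J f' 0 a s"
proof -
  have "((\<lambda>\<tau>. (s - a) * f' (a + \<tau>*(s-a))) has_integral
        (f (a + 1*(s-a)) - f (a + 0*(s-a)))) {0..1}"
  proof (rule fundamental_theorem_of_calculus)
    fix x :: real
    have "((\<lambda>\<tau>. f (a + \<tau>*(s-a))) has_real_derivative f' (a + x*(s-a)) * (s - a)) (at x)"
      by (rule DERIV_chain2[OF g]) (auto intro!: derivative_eq_intros)
    then show "((\<lambda>\<tau>. f (a + \<tau>*(s-a))) has_vector_derivative (s - a) * f' (a + x*(s-a))) (at x within {0..1})"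
      by (auto simp: has_real_derivative_iff_has_vector_derivative[symmetric] mult.commute intro: has_field_derivative_at_within)
  qed simp
  then have "integral {0..1} (\<lambda>\<tau>. (s - a) * f' (a + \<tau>*(s-a))) = f s - f a"
    by (intro integral_unique) simp
  moreover have "integral {0..1} (\<lambda>\<tau>. (s - a) * f' (a + \<tau>*(s-a))) = (s - a) * J f' 0 a s"
    by (simp add: J_def)
  ultimately show ?thesis by simp
qed

lemma J_bound:
  assumes c: "continuous_on UNIV g" and B: "\<And>x. \<bar>g x\<bar> \<le> B"
  shows "\<bar>J g k a s\<bar> \<le> B"
proof -
  have "norm (J g k a s) \<le> integral {0..1::real} (\<lambda>_. B)"
    unfolding J_def
  proof (rule Henstock_Kurzweil_Integration.integral_norm_bound_integral)
    show "(\<lambda>\<tau>. \<tau>^k * g (a + \<tau>*(s-a))) integrable_on {0..1}" by (rule J_integrable[OF c])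
    show "(\<lambda>_. B) integrable_on {0..1::real}" by (rule integrable_continuous_real) (rule continuous_on_const)
    fix x :: real assume "x \<in> {0..1}"
    then have "\<bar>x^k\<bar> \<le> 1" by (simp add: power_le_one)
    then have "\<bar>x^k\<bar> * \<bar>g (a + x*(s-a))\<bar> \<le> 1 * B"
      using B by (intro mult_mono) (auto intro: order_trans[OF abs_ge_zero B])
    then show "norm (x^k * g (a + x*(s-a))) \<le> B" by (simp add: abs_mult)
  qed
  then show ?thesis by simp
qed

lemma Dn_J: "Dn (Suc n) UNIV g \<Longrightarrow> Dn n UNIV (J g k a)"
proof (induction n arbitrary: g k)
  case 0
  then obtain g' where g': "\<forall>x. (g has_real_derivative g' x) (at x)" "Dn 0 UNIV g'" by auto
  have "continuous_on UNIV g'" using g'(2) by (rule Dn_contUNIV)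
  then have "\<forall>x. (J g k a has_real_derivative J g' (Suc k) a x) (at x)"
    using g' J_deriv by blast
  then show ?case by (auto simp: real_differentiable_def)
next
  case (Suc n)
  then obtain g' where g': "\<forall>x. (g has_real_derivative g' x) (at x)" "Dn (Suc n) UNIV g'" by auto
  have "continuous_on UNIV g'" using g'(2) by (rule Dn_contUNIV)
  then have "\<forall>x. (J g k a has_real_derivative J g' (Suc k) a x) (at x)"
    using g' J_deriv by auto
  moreover have "Dn n UNIV (J g' (Suc k) a)" using Suc.IH g'(2) by blast
  ultimately show ?case using DnI by blast
qed

lemma Sm_add: "Sm S f \<Longrightarrow> Sm S g \<Longrightarrow> Sm S (\<lambda>x. f x + g x)"
  unfolding Sm_def using Dn_add by blast
lemma Sm_mult: "Sm S f \<Longrightarrow> Sm S g \<Longrightarrow> Sm S (\<lambda>x. f x * g x)"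
  unfolding Sm_def using Dn_mult by blast
lemma Sm_const: "Sm S (\<lambda>x. c)"
  unfolding Sm_def using Dn_const by blast
lemma Sm_id: "Sm S (\<lambda>x. x)"
  unfolding Sm_def using Dn_id by blast
lemma Sm_subset: "Sm S f \<Longrightarrow> T \<subseteq> S \<Longrightarrow> Sm T f"
  unfolding Sm_def using Dn_subset by blast
lemma Sm_compose: "Sm T g \<Longrightarrow> Sm S f \<Longrightarrow> (\<And>x. x \<in> S \<Longrightarrow> f x \<in> T) \<Longrightarrow> Sm S (\<lambda>x. g (f x))"
  unfolding Sm_def using Dn_compose by blast
lemma Sm_J: "Sm UNIV g \<Longrightarrow> Sm UNIV (J g k a)"
  unfolding Sm_def using Dn_J by blast
lemma Sm_cont: "Sm UNIV g \<Longrightarrow> continuous_on UNIV g"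
  unfolding Sm_def using Dn_contUNIV by blast
lemma Sm_diff: "Sm S f \<Longrightarrow> Sm S g \<Longrightarrow> Sm S (\<lambda>x. f x - g x)"
proof -
  assume "Sm S f" "Sm S g"
  then have "Sm S (\<lambda>x. f x + (-1) * g x)" by (intro Sm_add Sm_mult Sm_const)
  moreover have "(\<lambda>x. f x + (-1) * g x) = (\<lambda>x. f x - g x)" by auto
  ultimately show ?thesis by simp
qed
lemma Sm_divc: "Sm S f \<Longrightarrow> Sm S (\<lambda>x. f x / c)"
proof -
  assume "Sm S f"
  then have "Sm S (\<lambda>x. (1/c) * f x)" by (intro Sm_mult Sm_const)
  moreover have "(\<lambda>x. (1/c) * f x) = (\<lambda>x. f x / c)" by auto
  ultimately show ?thesis by simp
qed

lemma Dn_cong: "open S \<Longrightarrow> (\<And>x. x \<in> S \<Longrightarrow> f x = g x) \<Longrightarrow> Dn n S f \<Longrightarrow> Dn n S g"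
proof (cases n)
  case 0
  assume o: "open S" and e: "\<And>x. x \<in> S \<Longrightarrow> f x = g x" and f: "Dn n S f"
  have "\<forall>x\<in>S. g differentiable at x"
  proof
    fix x assume x: "x \<in> S"
    then obtain D where "(f has_real_derivative D) (at x)" using f 0 by (auto simp: real_differentiable_def)
    then have "(g has_real_derivative D) (at x)" using has_field_derivative_transform_within_open[OF _ o x] e by blast
    then show "g differentiable at x" by (auto simp: real_differentiable_def)
  qed
  then show ?thesis using 0 by simp
next
  case (Suc m)
  assume o: "open S" and e: "\<And>x. x \<in> S \<Longrightarrow> f x = g x" and "Dn n S f"
  then obtain f' where f': "\<forall>x\<in>S. (f has_real_derivative f' x) (at x)" "Dn m S f'" using Suc by auto
  have "\<forall>x\<in>S. (g has_real_derivative f' x) (at x)"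
    using f'(1) o e by (auto intro: has_field_derivative_transform_within_open)
  then have "Dn (Suc m) S g" using f'(2) by (rule DnI)
  then show ?thesis using Suc by simp
qed

lemma Dn_deriv: "open S \<Longrightarrow> Dn (Suc n) S f \<Longrightarrow> Dn n S (deriv f)"
proof -
  assume o: "open S" and "Dn (Suc n) S f"
  then obtain f' where f': "\<forall>x\<in>S. (f has_real_derivative f' x) (at x)" "Dn n S f'" by auto
  have "\<And>x. x \<in> S \<Longrightarrow> f' x = deriv f x" using f'(1) by (metis DERIV_imp_deriv)
  then show ?thesis using Dn_cong[OF o _ f'(2)] by blast
qed

lemma Sm_derivs: "open S \<Longrightarrow> Sm S f \<Longrightarrow> Sm S ((deriv^^k) f)"
proof (induction k)
  case 0 then show ?case by simp
next
  case (Suc k)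
  then have sk: "Sm S ((deriv^^k) f)" by blast
  have "Dn n S (deriv ((deriv^^k) f))" for n using Dn_deriv[OF Suc.prems(1)] sk unfolding Sm_def by blast
  then show ?case unfolding Sm_def by simp
qed

lemma Sm_smooth_on: "open S \<Longrightarrow> Sm S f \<Longrightarrow> smooth_on S f"
  unfolding smooth_on_def
proof (intro allI ballI)
  fix n x assume "open S" "Sm S f" "x \<in> S"
  then have "Dn 0 S ((deriv^^n) f)" using Sm_derivs unfolding Sm_def by blast
  then show "(deriv ^^ n) f differentiable at x" using \<open>x \<in> S\<close> by simp
qed

lemma smooth_on_Dn: "smooth_on UNIV f \<Longrightarrow> Dn n UNIV ((deriv^^k) f)"
proof (induction n arbitrary: k)
  case 0 then show ?case by (simp add: smooth_on_def)
next
  case (Suc n)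
  have "\<forall>x. ((deriv^^k) f has_real_derivative (deriv^^(Suc k)) f x) (at x)"
    using Suc.prems unfolding smooth_on_def by (simp add: DERIV_deriv_iff_real_differentiable)
  then show ?case using Suc.IH[OF Suc.prems, of "Suc k"] by (intro DnI) auto
qed

lemma smooth_on_Sm: "smooth_on UNIV f \<Longrightarrow> Sm UNIV ((deriv^^k) f)"
  unfolding Sm_def using smooth_on_Dn by blast

lemma deriv_periodic:
  fixes g :: "real \<Rightarrow> real"
  assumes p: "\<And>s. g (s + L) = g s" and d: "\<And>s. g differentiable at s"
  shows "deriv g (s + L) = deriv g s"
proof -
  have "(g has_real_derivative deriv g (s + L)) (at (s + L))"
    using d by (simp add: DERIV_deriv_iff_real_differentiable)
  then have "((\<lambda>x. g (x + L)) has_real_derivative deriv g (s + L)) (at s)"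
    by (simp add: DERIV_shift)
  moreover have "(\<lambda>x. g (x + L)) = g" using p by auto
  ultimately have "(g has_real_derivative deriv g (s + L)) (at s)" by simp
  then show ?thesis by (simp add: DERIV_imp_deriv)
qed

lemma periodic_int:
  fixes g :: "real \<Rightarrow> real"
  assumes p: "\<And>s. g (s + L) = g s"
  shows "g (x + of_int k * L) = g x"
proof -
  have nat: "g (y + real n * L) = g y" for y n
  proof (induction n)
    case 0 then show ?case by simp
  next
    case (Suc n)
    have "g (y + real (Suc n) * L) = g ((y + real n * L) + L)" by (simp add: algebra_simps)
    then show ?case using p Suc by simp
  qed
  show ?thesis
  proof (cases "k \<ge> 0")
    case True
    define n where "n = nat k"
    have "k = int n" using True by (simp add: n_def)
    then show ?thesis using nat by simp
  next
    case False
    define n where "n = nat (-k)"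
    have "k = - int n" using False by (simp add: n_def)
    then have "g x = g ((x + of_int k * L) + real n * L)" by simp
    then show ?thesis using nat by simp
  qed
qed

lemma periodic_bound:
  fixes g :: "real \<Rightarrow> real"
  assumes p: "\<And>s. g (s + L) = g s" and L: "L > 0" and c: "continuous_on UNIV g"
  shows "\<exists>M. \<forall>s. \<bar>g s\<bar> \<le> M"
proof -
  have "bounded (g ` {0..L})"
    by (rule compact_imp_bounded[OF compact_continuous_image[OF continuous_on_subset[OF c] compact_Icc]]) simp
  then obtain B where B: "\<forall>x\<in>{0..L}. \<bar>g x\<bar> \<le> B" unfolding bounded_iff by auto
  have "\<bar>g s\<bar> \<le> B" for s
  proof -
    define k where "k = \<lfloor>s / L\<rfloor>"
    define s' where "s' = s - of_int k * L"
    have "of_int k \<le> s / L" "s / L < of_int k + 1" unfolding k_def by linarith+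
    then have "of_int k * L \<le> s" "s < (of_int k + 1) * L" using L by (auto simp: field_simps)
    then have "s' \<in> {0..L}" unfolding s'_def by (auto simp: algebra_simps)
    moreover have "g s = g s'"
      using periodic_int[of g L s' k, OF p] unfolding s'_def by simp
    ultimately show ?thesis using B by simp
  qed
  then show ?thesis by blast
qed

lemma mvt_bound:
  assumes d: "\<And>x. (f has_real_derivative f' x) (at x)" and B: "\<And>x. \<bar>f' x\<bar> \<le> M"
  shows "\<bar>f s - f a\<bar> \<le> M * \<bar>s - a\<bar>"
proof -
  have *: "\<bar>f y - f x\<bar> \<le> M * \<bar>y - x\<bar>" if xy: "x < y" for x y
  proof -
    obtain z where "f y - f x = (y - x) * f' z" using MVT2[OF xy, of f f'] d by blast
    then have "\<bar>f y - f x\<bar> = \<bar>y - x\<bar> * \<bar>f' z\<bar>" by (simp add: abs_mult)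
    also have "\<dots> \<le> \<bar>y - x\<bar> * M" by (rule mult_left_mono[OF B]) simp
    finally show ?thesis by (simp add: mult.commute)
  qed
  consider "a < s" | "s = a" | "s < a" by linarith
  then show ?thesis
  proof cases
    case 1 then show ?thesis using * by blast
  next
    case 2 then show ?thesis by simp
  next
    case 3 then show ?thesis using *[OF 3] by (simp add: abs_minus_commute)
  qed
qed

lemma powr4: "A \<ge> 0 \<Longrightarrow> ((t::real)^4 * A) powr (1/4) = \<bar>t\<bar> * A powr (1/4)"
proof -
  assume A: "A \<ge> 0"
  have e1: "t^4 = \<bar>t\<bar> powr (real 4)" by (simp add: powr_realpow' power_even_abs)
  have "(t^4) powr (1/4) = \<bar>t\<bar>"
  proof -
    have "(t^4) powr (1/4) = (\<bar>t\<bar> powr (real 4)) powr (1/4)" by (subst e1) (rule refl)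
    also have "\<dots> = \<bar>t\<bar> powr (real 4 * (1/4))" by (rule powr_powr)
    also have "\<dots> = \<bar>t\<bar>" by simp
    finally show ?thesis .
  qed
  then show ?thesis by (simp add: powr_mult)
qed

lemma J_lin: "J (\<lambda>\<sigma>. (\<sigma> - a) * g \<sigma>) 0 a s = (s - a) * J g 1 a s"
proof -
  have "(\<lambda>\<tau>. \<tau>^0 * ((a + \<tau>*(s-a)) - a) * g (a + \<tau>*(s-a))) = (\<lambda>\<tau>. (s-a) * (\<tau>^1 * g (a + \<tau>*(s-a))))"
    by (auto simp: fun_eq_iff algebra_simps)
  then show ?thesis unfolding J_def by (simp add: mult.assoc)
qed

lemma alg4: "((t*p)^2 + (t*q)^2)^2 + 16 * (t^2 * r)^2 = (t::real)^4 * ((p*p+q*q)*(p*p+q*q) + 16*(r*r))"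
  by algebra

lemma lin80: "\<bar>P\<bar> \<le> 2 * (4 * M) \<Longrightarrow> \<bar>Q\<bar> \<le> 2 * M \<Longrightarrow> \<bar>2 * P + 32 * Q\<bar> \<le> 80 * (M::real)"
  by arith

lemma key:
  fixes \<gamma> :: "real \<Rightarrow> heis" and X Y U X1 Y1 X2 Y2 :: "real \<Rightarrow> real" and M a :: real
  assumes dfX: "X = (\<lambda>s. hx (\<gamma> s))" and dfY: "Y = (\<lambda>s. hy (\<gamma> s))" and dfU: "U = (\<lambda>s. hu (\<gamma> s))"
  and smX1: "Sm UNIV X1" and smY1: "Sm UNIV Y1" and smX2: "Sm UNIV X2" and smY2: "Sm UNIV Y2"
  and dX: "\<And>s. (X has_real_derivative X1 s) (at s)" and dY: "\<And>s. (Y has_real_derivative Y1 s) (at s)"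
  and dX1: "\<And>s. (X1 has_real_derivative X2 s) (at s)" and dY1: "\<And>s. (Y1 has_real_derivative Y2 s) (at s)"
  and dU: "\<And>s. (U has_real_derivative (X s * Y1 s - X1 s * Y s)/2) (at s)"
  and unit: "\<And>s. X1 s ^ 2 + Y1 s ^ 2 = 1"
  and bX2: "\<And>s. \<bar>X2 s\<bar> \<le> M" and bY2: "\<And>s. \<bar>Y2 s\<bar> \<le> M" and M1: "M \<ge> 1"
  shows "smooth_on (ball a (1/(80*M))) (chord_H \<gamma> a) \<and>
         (\<forall>s\<in>ball a (1/(80*M)). deriv (chord_H \<gamma> a) s > 0)"
proof -
  have cX1: "continuous_on UNIV X1" using smX1 by (rule Sm_cont)
  have cY1: "continuous_on UNIV Y1" using smY1 by (rule Sm_cont)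
  have cX2: "continuous_on UNIV X2" using smX2 by (rule Sm_cont)
  have cY2: "continuous_on UNIV Y2" using smY2 by (rule Sm_cont)
  have bX1: "\<bar>X1 s\<bar> \<le> 1" for s
  proof -
    have "X1 s ^ 2 \<le> 1" using unit[of s] by (metis le_add_same_cancel1 zero_le_power2)
    then show ?thesis by (simp add: abs_square_le_1)
  qed
  have bY1: "\<bar>Y1 s\<bar> \<le> 1" for s
  proof -
    have "Y1 s ^ 2 \<le> 1" using unit[of s] by (metis le_add_same_cancel2 zero_le_power2)
    then show ?thesis by (simp add: abs_square_le_1)
  qed
  define \<alpha> where "\<alpha> = J X1 0 a"
  define \<beta> where "\<beta> = J Y1 0 a"
  define \<alpha>' where "\<alpha>' = J X2 1 a"
  define \<beta>' where "\<beta>' = J Y2 1 a"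
  define w where "w = (\<lambda>s. (\<alpha> s * Y1 s - X1 s * \<beta> s) / 2)"
  define w' where "w' = (\<lambda>s. (\<alpha>' s * Y1 s + \<alpha> s * Y2 s - X2 s * \<beta> s - X1 s * \<beta>' s) / 2)"
  define c where "c = J w 1 a"
  define c' where "c' = J w' 2 a"
  define A where "A = (\<lambda>s. (\<alpha> s * \<alpha> s + \<beta> s * \<beta> s) * (\<alpha> s * \<alpha> s + \<beta> s * \<beta> s) + 16 * (c s * c s))"
  define A' where "A' = (\<lambda>s. 2 * (\<alpha> s * \<alpha> s + \<beta> s * \<beta> s) * (2 * \<alpha> s * \<alpha>' s + 2 * \<beta> s * \<beta>' s) + 32 * c s * c' s)"
  have sm\<alpha>: "Sm UNIV \<alpha>" unfolding \<alpha>_def by (rule Sm_J[OF smX1])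
  have sm\<beta>: "Sm UNIV \<beta>" unfolding \<beta>_def by (rule Sm_J[OF smY1])
  have sm\<alpha>': "Sm UNIV \<alpha>'" unfolding \<alpha>'_def by (rule Sm_J[OF smX2])
  have sm\<beta>': "Sm UNIV \<beta>'" unfolding \<beta>'_def by (rule Sm_J[OF smY2])
  have smw: "Sm UNIV w" unfolding w_def
    by (rule Sm_divc, rule Sm_diff; rule Sm_mult) (fact sm\<alpha> smY1 smX1 sm\<beta>)+
  have smw': "Sm UNIV w'" unfolding w'_def
    by (rule Sm_divc, rule Sm_diff, rule Sm_diff, rule Sm_add; rule Sm_mult) (fact sm\<alpha>' smY1 sm\<alpha> smY2 smX2 sm\<beta> smX1 sm\<beta>')+
  have smc: "Sm UNIV c" unfolding c_def by (rule Sm_J[OF smw])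
  have smA: "Sm UNIV A" unfolding A_def
    by (rule Sm_add; rule Sm_mult; (rule Sm_add)?; (rule Sm_mult)?) (fact sm\<alpha> sm\<beta> smc Sm_const)+
  have cw: "continuous_on UNIV w" using smw by (rule Sm_cont)
  have cw': "continuous_on UNIV w'" using smw' by (rule Sm_cont)
  have d\<alpha>: "(\<alpha> has_real_derivative \<alpha>' s) (at s)" for s
    using J_deriv[OF dX1 cX2, of 0 a s] by (simp add: \<alpha>_def \<alpha>'_def)
  have d\<beta>: "(\<beta> has_real_derivative \<beta>' s) (at s)" for s
    using J_deriv[OF dY1 cY2, of 0 a s] by (simp add: \<beta>_def \<beta>'_def)
  have dw: "(w has_real_derivative w' s) (at s)" for s
    unfolding w_def w'_def
    by (auto intro!: derivative_eq_intros d\<alpha> d\<beta> dX1 dY1 simp: field_simps)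
  have dc: "(c has_real_derivative c' s) (at s)" for s
    using J_deriv[OF dw cw', of 1 a s] by (simp add: c_def c'_def numeral_2_eq_2)
  have dA: "(A has_real_derivative A' s) (at s)" for s
    unfolding A_def A'_def
    by (auto intro!: derivative_eq_intros d\<alpha> d\<beta> dc simp: algebra_simps)
  have hX: "X s - X a = (s - a) * \<alpha> s" for s
    unfolding \<alpha>_def by (rule hadamard[OF dX cX1])
  have hY: "Y s - Y a = (s - a) * \<beta> s" for s
    unfolding \<beta>_def by (rule hadamard[OF dY cY1])
  define V where "V = (\<lambda>s. U s - U a - (X a * Y s - X s * Y a) / 2)"
  have dV: "(V has_real_derivative (s - a) * w s) (at s)" for s
  proof -
    have "(V has_real_derivative (X s * Y1 s - X1 s * Y s)/2 - (X a * Y1 s - X1 s * Y a) / 2) (at s)"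
      unfolding V_def by (auto intro!: derivative_eq_intros dU dX dY simp: field_simps)
    moreover have "(X s * Y1 s - X1 s * Y s)/2 - (X a * Y1 s - X1 s * Y a) / 2
        = ((X s - X a) * Y1 s - X1 s * (Y s - Y a)) / 2" by (simp add: field_simps)
    moreover have "\<dots> = (s - a) * w s" unfolding hX hY w_def by (simp add: algebra_simps)
    ultimately show ?thesis by simp
  qed
  have cV': "continuous_on UNIV (\<lambda>s. (s - a) * w s)"
    by (intro continuous_intros cw)
  have hV: "V s = (s - a)^2 * c s" for s
  proof -
    have "V s - V a = (s - a) * J (\<lambda>s. (s - a) * w s) 0 a s" by (rule hadamard[OF dV cV'])
    also have "\<dots> = (s - a) * ((s - a) * c s)" by (simp add: J_lin c_def)
    finally show ?thesis by (simp add: V_def power2_eq_square)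
  qed
  have Anonneg: "A s \<ge> 0" for s unfolding A_def by simp
  have hN: "koranyi_dist (\<gamma> a) (\<gamma> s) = \<bar>s - a\<bar> * A s powr (1/4)" for s
  proof -
    have "heis_mult (heis_inv (\<gamma> a)) (\<gamma> s) = (X s - X a, Y s - Y a, V s)"
      by (simp add: heis_mult_def heis_inv_def hx_def hy_def hu_def dfX dfY dfU V_def field_simps)
    then have "koranyi_dist (\<gamma> a) (\<gamma> s) = (((X s - X a)^2 + (Y s - Y a)^2)^2 + 16 * V s ^ 2) powr (1/4)"
      by (simp add: koranyi_dist_def koranyi_norm_def hx_def hy_def hu_def)
    also have "((X s - X a)^2 + (Y s - Y a)^2)^2 + 16 * V s ^ 2 = (s - a)^4 * A s"
      unfolding hX hY hV A_def by (rule alg4)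
    finally show ?thesis using powr4[OF Anonneg] by simp
  qed
  have hch: "chord_H \<gamma> a = (\<lambda>s. (s - a) * (1 * A s powr (1/4)))"
  proof
    fix s show "chord_H \<gamma> a s = (s - a) * (1 * A s powr (1/4))"
      unfolding chord_H_def hN by (auto simp: algebra_simps)
  qed
  have b\<alpha>: "\<bar>\<alpha> s\<bar> \<le> 1" for s unfolding \<alpha>_def by (rule J_bound[OF cX1 bX1])
  have b\<beta>: "\<bar>\<beta> s\<bar> \<le> 1" for s unfolding \<beta>_def by (rule J_bound[OF cY1 bY1])
  have b\<alpha>': "\<bar>\<alpha>' s\<bar> \<le> M" for s unfolding \<alpha>'_def by (rule J_bound[OF cX2 bX2])
  have b\<beta>': "\<bar>\<beta>' s\<bar> \<le> M" for s unfolding \<beta>'_def by (rule J_bound[OF cY2 bY2])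
  have prod1: "\<bar>p * q\<bar> \<le> B" if "\<bar>p\<bar> \<le> 1" "\<bar>q\<bar> \<le> B" for p q B :: real
  proof -
    have "\<bar>p\<bar> * \<bar>q\<bar> \<le> 1 * B" using that by (intro mult_mono) auto
    then show ?thesis by (simp add: abs_mult)
  qed
  have bw: "\<bar>w s\<bar> \<le> 1" for s
  proof -
    have "\<bar>\<alpha> s * Y1 s\<bar> \<le> 1" "\<bar>X1 s * \<beta> s\<bar> \<le> 1"
      using prod1[OF b\<alpha>[of s] bY1[of s]] prod1[OF bX1[of s] b\<beta>[of s]] by auto
    then show ?thesis unfolding w_def by auto
  qed
  have bw': "\<bar>w' s\<bar> \<le> 2 * M" for s
  proof -
    have "\<bar>\<alpha>' s * Y1 s\<bar> \<le> M" using prod1[OF bY1[of s] b\<alpha>'[of s]] by (simp add: mult.commute)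
    moreover have "\<bar>\<alpha> s * Y2 s\<bar> \<le> M" using prod1[OF b\<alpha>[of s] bY2[of s]] .
    moreover have "\<bar>X2 s * \<beta> s\<bar> \<le> M" using prod1[OF b\<beta>[of s] bX2[of s]] by (simp add: mult.commute)
    moreover have "\<bar>X1 s * \<beta>' s\<bar> \<le> M" using prod1[OF bX1[of s] b\<beta>'[of s]] .
    ultimately show ?thesis unfolding w'_def by auto
  qed
  have bc: "\<bar>c s\<bar> \<le> 1" for s unfolding c_def by (rule J_bound[OF cw bw])
  have bc': "\<bar>c' s\<bar> \<le> 2 * M" for s unfolding c'_def by (rule J_bound[OF cw' bw'])
  have bA': "\<bar>A' s\<bar> \<le> 80 * M" for s
  proof -
    have s2: "\<bar>\<alpha> s * \<alpha> s + \<beta> s * \<beta> s\<bar> \<le> 2"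
      using prod1[OF b\<alpha>[of s] b\<alpha>[of s]] prod1[OF b\<beta>[of s] b\<beta>[of s]] by linarith
    have t1: "\<bar>2 * \<alpha> s * \<alpha>' s + 2 * \<beta> s * \<beta>' s\<bar> \<le> 4 * M"
    proof -
      have p1: "\<bar>\<alpha> s * \<alpha>' s\<bar> \<le> M" using prod1[OF b\<alpha>[of s] b\<alpha>'[of s]] .
      have p2: "\<bar>\<beta> s * \<beta>' s\<bar> \<le> M" using prod1[OF b\<beta>[of s] b\<beta>'[of s]] .
      have "2 * \<alpha> s * \<alpha>' s + 2 * \<beta> s * \<beta>' s = 2 * (\<alpha> s * \<alpha>' s) + 2 * (\<beta> s * \<beta>' s)" by simp
      then show ?thesis using p1 p2 by arith
    qed
    have "\<bar>(\<alpha> s * \<alpha> s + \<beta> s * \<beta> s) * (2 * \<alpha> s * \<alpha>' s + 2 * \<beta> s * \<beta>' s)\<bar> \<le> 2 * (4 * M)"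
      unfolding abs_mult by (rule mult_mono[OF s2 t1]) auto
    moreover have "\<bar>c s * c' s\<bar> \<le> 2 * M" using prod1[OF bc[of s] bc'[of s]] .
    moreover have "A' s = 2 * ((\<alpha> s * \<alpha> s + \<beta> s * \<beta> s) * (2 * \<alpha> s * \<alpha>' s + 2 * \<beta> s * \<beta>' s)) + 32 * (c s * c' s)"
      unfolding A'_def by (simp add: mult.assoc)
    ultimately show ?thesis using lin80 by metis
  qed
  define \<delta> where "\<delta> = 1 / (80 * M)"
  have Mpos: "M > 0" using M1 by simp
  have Apos: "A s \<ge> 1/4" if s: "s \<in> ball a \<delta>" for s
  proof -
    have ds: "\<bar>s - a\<bar> < \<delta>" using s by (simp add: dist_real_def abs_minus_commute)
    have Md: "M * \<bar>s - a\<bar> \<le> 1/80"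
    proof -
      have "M * \<bar>s - a\<bar> \<le> M * \<delta>" using ds Mpos by (intro mult_left_mono) auto
      also have "\<dots> = 1/80" unfolding \<delta>_def using Mpos by simp
      finally show ?thesis .
    qed
    have e1: "\<bar>\<alpha> s - X1 a\<bar> \<le> 1/80"
      using mvt_bound[OF d\<alpha> b\<alpha>', of s a] Md by (simp add: \<alpha>_def J_same)
    have e2: "\<bar>\<beta> s - Y1 a\<bar> \<le> 1/80"
      using mvt_bound[OF d\<beta> b\<beta>', of s a] Md by (simp add: \<beta>_def J_same)
    define e1' where "e1' = \<alpha> s - X1 a"
    define e2' where "e2' = \<beta> s - Y1 a"
    have "\<alpha> s * \<alpha> s + \<beta> s * \<beta> s = (X1 a^2 + Y1 a^2) + 2 * (X1 a * e1') + 2 * (Y1 a * e2') + e1' * e1' + e2' * e2'"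
      unfolding e1'_def e2'_def by (simp add: power2_eq_square algebra_simps)
    also have "\<dots> \<ge> 1 - 2 * (1/80) - 2 * (1/80)"
    proof -
      have "\<bar>X1 a * e1'\<bar> \<le> 1/80" using prod1[OF bX1[of a] e1] unfolding e1'_def by blast
      moreover have "\<bar>Y1 a * e2'\<bar> \<le> 1/80" using prod1[OF bY1[of a] e2] unfolding e2'_def by blast
      moreover have "e1' * e1' \<ge> 0" "e2' * e2' \<ge> 0" by auto
      ultimately show ?thesis using unit[of a] by linarith
    qed
    finally have g: "\<alpha> s * \<alpha> s + \<beta> s * \<beta> s \<ge> 1/2" by simp
    have "(1/2) * (1/2) \<le> (\<alpha> s * \<alpha> s + \<beta> s * \<beta> s) * (\<alpha> s * \<alpha> s + \<beta> s * \<beta> s)"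
      using g by (intro mult_mono) auto
    moreover have "c s * c s \<ge> 0" by simp
    ultimately show ?thesis unfolding A_def by linarith
  qed
  have smF: "Sm (ball a \<delta>) (\<lambda>s. (s - a) * (1 * A s powr (1/4)))"
  proof (rule Sm_mult)
    show "Sm (ball a \<delta>) (\<lambda>s. s - a)" by (intro Sm_diff Sm_id Sm_const)
    have "Sm {0<..} (\<lambda>x. 1 * x powr (1/4))" unfolding Sm_def using Dn_powr by blast
    moreover have "Sm (ball a \<delta>) A" using Sm_subset[OF smA] by blast
    ultimately show "Sm (ball a \<delta>) (\<lambda>s. 1 * A s powr (1/4))"
      by (rule Sm_compose) (use Apos in force)
  qed
  have part1: "smooth_on (ball a \<delta>) (chord_H \<gamma> a)"
    unfolding hch by (rule Sm_smooth_on[OF open_ball smF])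
  have part2: "deriv (chord_H \<gamma> a) s > 0" if s: "s \<in> ball a \<delta>" for s
  proof -
    have Ap: "A s > 0" using Apos[OF s] by simp
    have "((\<lambda>s. A s powr (1/4)) has_real_derivative (1/4 * A s powr (1/4 - 1)) * A' s) (at s)"
      by (rule DERIV_chain2[OF has_real_derivative_powr[OF Ap] dA])
    then have d2: "((\<lambda>s. 1 * A s powr (1/4)) has_real_derivative 1 * ((1/4 * A s powr (1/4 - 1)) * A' s)) (at s)"
      by (rule DERIV_cmult)
    have d1: "((\<lambda>s. s - a) has_real_derivative 1) (at s)" by (auto intro!: derivative_eq_intros)
    have "((\<lambda>s. (s - a) * (1 * A s powr (1/4))) has_real_derivative
        1 * (1 * A s powr (1/4)) + 1 * ((1/4 * A s powr (1/4 - 1)) * A' s) * (s - a)) (at s)"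
      using DERIV_mult[OF d1 d2] .
    then have "deriv (chord_H \<gamma> a) s = A s powr (1/4) + (1/4 * A s powr (1/4 - 1)) * A' s * (s - a)"
      unfolding hch by (simp add: DERIV_imp_deriv)
    also have "\<dots> = A s powr (-3/4) * (A s + A' s * (s - a) / 4)"
    proof -
      have "A s powr (1/4) = A s powr (1 + (-3/4))" by simp
      also have "\<dots> = A s * A s powr (-3/4)" using Ap by (subst powr_add) simp
      finally show ?thesis by (simp add: algebra_simps)
    qed
    also have "\<dots> > 0"
    proof (rule mult_pos_pos)
      show "A s powr (-3/4) > 0" using Ap by simp
      have ds: "\<bar>s - a\<bar> < \<delta>" using s by (simp add: dist_real_def abs_minus_commute)
      have "\<bar>A' s * (s - a)\<bar> \<le> 80 * M * \<bar>s - a\<bar>" unfolding abs_mult by (rule mult_right_mono[OF bA']) simp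
      also have "\<dots> < 80 * M * \<delta>" using ds Mpos by simp
      also have "\<dots> = 1" unfolding \<delta>_def using Mpos by simp
      finally have "\<bar>A' s * (s - a)\<bar> < 1" .
      then show "A s + A' s * (s - a) / 4 > 0" using Apos[OF s] by linarith
    qed
    finally show ?thesis .
  qed
  show ?thesis using part1 part2 unfolding \<delta>_def by blast
qed

theorem lemma2p2:
  fixes \<gamma> :: "real \<Rightarrow> heis" and L :: real
  assumes "legendrian_knot_param \<gamma> L"
  shows "\<exists>\<delta>>0. \<forall>s0::real.
           smooth_on (ball s0 \<delta>) (chord_H \<gamma> s0) \<and>
           (\<forall>s\<in>ball s0 \<delta>. deriv (chord_H \<gamma> s0) s > 0)"
proof -
  define X where "X = (\<lambda>s. hx (\<gamma> s))"
  define Y where "Y = (\<lambda>s. hy (\<gamma> s))"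
  define U where "U = (\<lambda>s. hu (\<gamma> s))"
  have L: "L > 0" and smX: "smooth_on UNIV X" and smY: "smooth_on UNIV Y" and smU: "smooth_on UNIV U"
    and per: "\<And>s. \<gamma> (s + L) = \<gamma> s"
    and leg: "\<And>s. deriv U s = (X s * deriv Y s - deriv X s * Y s) / 2"
    and unit: "\<And>s. (deriv X s)\<^sup>2 + (deriv Y s)\<^sup>2 = 1"
    using assms unfolding legendrian_knot_param_def smooth_curve_def X_def Y_def U_def by auto
  define X1 where "X1 = deriv X"
  define Y1 where "Y1 = deriv Y"
  define X2 where "X2 = deriv X1"
  define Y2 where "Y2 = deriv Y1"
  have smX1: "Sm UNIV X1" using smooth_on_Sm[OF smX, of 1] by (simp add: X1_def)
  have smY1: "Sm UNIV Y1" using smooth_on_Sm[OF smY, of 1] by (simp add: Y1_def)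
  have smX2: "Sm UNIV X2" using smooth_on_Sm[OF smX, of "Suc (Suc 0)"] by (simp add: X1_def X2_def)
  have smY2: "Sm UNIV Y2" using smooth_on_Sm[OF smY, of "Suc (Suc 0)"] by (simp add: Y1_def Y2_def)
  have hX: "(deriv^^n) X differentiable at s" for n s using smX unfolding smooth_on_def by blast
  have hY: "(deriv^^n) Y differentiable at s" for n s using smY unfolding smooth_on_def by blast
  have hU: "(deriv^^n) U differentiable at s" for n s using smU unfolding smooth_on_def by blast
  have diffX: "X differentiable at s" for s using hX[of 0 s] by simp
  have diffY: "Y differentiable at s" for s using hY[of 0 s] by simp
  have diffU: "U differentiable at s" for s using hU[of 0 s] by simp
  have diffX1: "X1 differentiable at s" for s using hX[of 1 s] by (simp add: X1_def)
  have diffY1: "Y1 differentiable at s" for s using hY[of 1 s] by (simp add: Y1_def)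
  have dX: "(X has_real_derivative X1 s) (at s)" for s
    using diffX by (simp add: X1_def DERIV_deriv_iff_real_differentiable)
  have dY: "(Y has_real_derivative Y1 s) (at s)" for s
    using diffY by (simp add: Y1_def DERIV_deriv_iff_real_differentiable)
  have dX1: "(X1 has_real_derivative X2 s) (at s)" for s
    using diffX1 by (simp add: X2_def DERIV_deriv_iff_real_differentiable)
  have dY1: "(Y1 has_real_derivative Y2 s) (at s)" for s
    using diffY1 by (simp add: Y2_def DERIV_deriv_iff_real_differentiable)
  have dU: "(U has_real_derivative (X s * Y1 s - X1 s * Y s)/2) (at s)" for s
    using diffU[of s] leg[of s] by (simp add: X1_def Y1_def DERIV_deriv_iff_real_differentiable[symmetric])
  have unit': "X1 s ^ 2 + Y1 s ^ 2 = 1" for s using unit by (simp add: X1_def Y1_def)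
  have pX: "X (s + L) = X s" for s using per by (simp add: X_def)
  have pY: "Y (s + L) = Y s" for s using per by (simp add: Y_def)
  have pX1: "X1 (s + L) = X1 s" for s unfolding X1_def by (rule deriv_periodic[OF pX diffX])
  have pY1: "Y1 (s + L) = Y1 s" for s unfolding Y1_def by (rule deriv_periodic[OF pY diffY])
  have pX2: "X2 (s + L) = X2 s" for s unfolding X2_def by (rule deriv_periodic[OF pX1 diffX1])
  have pY2: "Y2 (s + L) = Y2 s" for s unfolding Y2_def by (rule deriv_periodic[OF pY1 diffY1])
  obtain M1 where M1: "\<And>s. \<bar>X2 s\<bar> \<le> M1" using periodic_bound[OF pX2 L Sm_cont[OF smX2]] by blast
  obtain M2 where M2: "\<And>s. \<bar>Y2 s\<bar> \<le> M2" using periodic_bound[OF pY2 L Sm_cont[OF smY2]] by blast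
  define M where "M = max 1 (max M1 M2)"
  have bX2: "\<bar>X2 s\<bar> \<le> M" for s using M1[of s] unfolding M_def by linarith
  have bY2: "\<bar>Y2 s\<bar> \<le> M" for s using M2[of s] unfolding M_def by linarith
  have M1': "M \<ge> 1" unfolding M_def by linarith
  have "\<forall>s0::real. smooth_on (ball s0 (1/(80*M))) (chord_H \<gamma> s0) \<and>
           (\<forall>s\<in>ball s0 (1/(80*M)). deriv (chord_H \<gamma> s0) s > 0)"
    using key[OF X_def Y_def U_def smX1 smY1 smX2 smY2 dX dY dX1 dY1 dU unit' bX2 bY2 M1'] by blast
  moreover have "1/(80*M) > 0" using M1' by simp
  ultimately show ?thesis by blast
qed

end
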